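(* Let $\mathbf{U}$ be the $6\times 6$ matrix $$\mathbf{U}=\begin{pmatrix} 0 & -3 & 1 & -1 & -1 & -1 \\ 1 & 0 & -3 & -1 & -1 & -1 \\ -3 & 1 & 0 & -1 & -1 & -1 \\ -4 & -4 & 3 & 0 & -5 & 1 \\ -1 & -1 & -3 & 1 & 0 & -5 \\ -1 & -1 & -3 & -5 & 1 & 0 \end{pmatrix}$$ and consider the symmetric two-player game in which the row player's payoff matrix is $\mathbf{U}$ and the column player's payoff matrix is $\mathbf{U}^T$. This game has a unique Nash equilibrium (symmetric or not), namely $(\mathbf{n}_{123},\mathbf{n}_{123})$ with $\mathbf{n}_{123}=(1/3,1/3,1/3,0,0,0)$.
   Context: In the symmetric game, a mixed strategy is an element of the simplex $S_6=\{\mathbf{x}\in\mathbb{R}_+^6:\sum_i x_i=1\}$; when the row player plays $\mathbf{x}$ and the column player plays $\mathbf{y}$, the row player gets $\mathbf{x}\cdot\mathbf{U}\mathbf{y}$ and the column player gets $\mathbf{y}\cdot\mathbf{U}\mathbf{x}$. A Nash equilibrium is a pair $(\mathbf{x},\mathbf{y})$ of mixed strategies, each a best reply to the other. *)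

theory Defs
  imports Complex_Main
begin

text \<open>Pure strategies are indexed 0..5 (paper's 1..6).
  Mixed strategies: vectors x :: nat \<Rightarrow> real, only entries i < 6 matter.
  Two strategies are identified when they agree on {0..<6}.\<close>

definition U :: "nat \<Rightarrow> nat \<Rightarrow> real" where
  "U i j = [[ 0, -3,  1, -1, -1, -1],
            [ 1,  0, -3, -1, -1, -1],
            [-3,  1,  0, -1, -1, -1],
            [-4, -4,  3,  0, -5,  1],
            [-1, -1, -3,  1,  0, -5],
            [-1, -1, -3, -5,  1,  0]] ! i ! j"

definition simplex6 :: "(nat \<Rightarrow> real) set" where
  "simplex6 = {x. (\<forall>i<6. 0 \<le> x i) \<and> (\<Sum>i<6. x i) = 1}"

definition bil :: "(nat \<Rightarrow> nat \<Rightarrow> real) \<Rightarrow> (nat \<Rightarrow> real) \<Rightarrow> (nat \<Rightarrow> real) \<Rightarrow> real" where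
  "bil A x y = (\<Sum>i<6. \<Sum>j<6. x i * A i j * y j)"

text \<open>Row player plays x, column player plays y: row gets x\<cdot>Uy, column gets y\<cdot>Ux.\<close>
definition nash_eq :: "(nat \<Rightarrow> real) \<Rightarrow> (nat \<Rightarrow> real) \<Rightarrow> bool" where
  "nash_eq x y \<longleftrightarrow> x \<in> simplex6 \<and> y \<in> simplex6 \<and>
     (\<forall>x'\<in>simplex6. bil U x' y \<le> bil U x y) \<and>
     (\<forall>y'\<in>simplex6. bil U y' x \<le> bil U y x)"

definition n123 :: "nat \<Rightarrow> real" where
  "n123 i = (if i < 3 then 1/3 else 0)"

end

theory Submission imports Defs begin

lemma sum6: "(\<Sum>i<6. f i) = f 0 + f 1 + f 2 + f 3 + f 4 + f 5" for f :: "nat \<Rightarrow> real"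
  by (simp add: eval_nat_numeral)

lemma bil_alt: "bil A x y = (\<Sum>i<6. x i * (\<Sum>j<6. A i j * y j))"
  unfolding bil_def by (simp add: sum_distrib_left mult.assoc)

definition e :: "nat \<Rightarrow> nat \<Rightarrow> real" where "e i = (\<lambda>k. if k = i then 1 else 0)"

lemma e_simplex: "i < 6 \<Longrightarrow> e i \<in> simplex6"
  unfolding simplex6_def e_def by auto

lemma bil_e: assumes "i < 6" shows "bil A (e i) y = (\<Sum>j<6. A i j * y j)"
proof -
  have "bil A (e i) y = (\<Sum>k<6. (if k = i then (\<Sum>j<6. A k j * y j) else 0))"
    unfolding bil_alt e_def by (intro sum.cong) auto
  also have "\<dots> = (\<Sum>j<6. A i j * y j)" using assms by (simp add: sum.delta)
  finally show ?thesis .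
qed

lemma compl:
  fixes x g :: "nat \<Rightarrow> real"
  assumes a1: "\<forall>i<6. 0 \<le> x i" and a2: "(\<Sum>i<6. x i) = 1" and a3: "\<forall>i<6. g i \<le> v"
    and a4: "(\<Sum>i<6. x i * g i) = v"
  shows "\<forall>i<6. x i = 0 \<or> g i = v"
proof -
  have "(\<Sum>i<6. x i * (v - g i)) = (\<Sum>i<6. x i) * v - (\<Sum>i<6. x i * g i)"
    by (simp add: right_diff_distrib sum_subtractf sum_distrib_right)
  also have "\<dots> = 0" unfolding a2 a4 by simp
  finally have s: "(\<Sum>i<6. x i * (v - g i)) = 0" .
  have nn: "\<forall>i\<in>{..<6}. 0 \<le> x i * (v - g i)"
  proof
    fix i :: nat assume "i \<in> {..<6}"
    then have "0 \<le> x i" "0 \<le> v - g i" using a1 a3 by auto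
    then show "0 \<le> x i * (v - g i)" by (rule mult_nonneg_nonneg)
  qed
  have z: "\<forall>i\<in>{..<6}. x i * (v - g i) = 0"
    using sum_nonneg_eq_0_iff[of "{..<6}" "\<lambda>i. x i * (v - g i)"] s nn by blast
  show ?thesis
  proof (intro allI impI)
    fix i :: nat assume "i < 6"
    then have "x i * (v - g i) = 0" using z by simp
    then show "x i = 0 \<or> g i = v" by auto
  qed
qed

lemma Uvals: "U 0 0 = 0" "U 0 1 = -3" "U 3 4 = -5" "U 5 2 = -3"
  by (simp_all add: U_def)


lemma core:
  fixes x0 x1 x2 x3 x4 x5 y0 y1 y2 y3 y4 y5 g0 g1 g2 g3 g4 g5 h0 h1 h2 h3 h4 h5 v w :: real
  assumes Nx0: "0 \<le> x0"
    and Nx1: "0 \<le> x1"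
    and Nx2: "0 \<le> x2"
    and Nx3: "0 \<le> x3"
    and Nx4: "0 \<le> x4"
    and Nx5: "0 \<le> x5"
    and Ny0: "0 \<le> y0"
    and Ny1: "0 \<le> y1"
    and Ny2: "0 \<le> y2"
    and Ny3: "0 \<le> y3"
    and Ny4: "0 \<le> y4"
    and Ny5: "0 \<le> y5"
    and Sx: "x0 + x1 + x2 + x3 + x4 + x5 = 1"
    and Sy: "y0 + y1 + y2 + y3 + y4 + y5 = 1"
    and E0: "g0 = (0) * y0 + (-3) * y1 + (1) * y2 + (-1) * y3 + (-1) * y4 + (-1) * y5"
    and E1: "g1 = (1) * y0 + (0) * y1 + (-3) * y2 + (-1) * y3 + (-1) * y4 + (-1) * y5"
    and E2: "g2 = (-3) * y0 + (1) * y1 + (0) * y2 + (-1) * y3 + (-1) * y4 + (-1) * y5"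
    and E3: "g3 = (-4) * y0 + (-4) * y1 + (3) * y2 + (0) * y3 + (-5) * y4 + (1) * y5"
    and E4: "g4 = (-1) * y0 + (-1) * y1 + (-3) * y2 + (1) * y3 + (0) * y4 + (-5) * y5"
    and E5: "g5 = (-1) * y0 + (-1) * y1 + (-3) * y2 + (-5) * y3 + (1) * y4 + (0) * y5"
    and F0: "h0 = (0) * x0 + (-3) * x1 + (1) * x2 + (-1) * x3 + (-1) * x4 + (-1) * x5"
    and F1: "h1 = (1) * x0 + (0) * x1 + (-3) * x2 + (-1) * x3 + (-1) * x4 + (-1) * x5"
    and F2: "h2 = (-3) * x0 + (1) * x1 + (0) * x2 + (-1) * x3 + (-1) * x4 + (-1) * x5"
    and F3: "h3 = (-4) * x0 + (-4) * x1 + (3) * x2 + (0) * x3 + (-5) * x4 + (1) * x5"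
    and F4: "h4 = (-1) * x0 + (-1) * x1 + (-3) * x2 + (1) * x3 + (0) * x4 + (-5) * x5"
    and F5: "h5 = (-1) * x0 + (-1) * x1 + (-3) * x2 + (-5) * x3 + (1) * x4 + (0) * x5"
    and G0: "g0 \<le> v"
    and G1: "g1 \<le> v"
    and G2: "g2 \<le> v"
    and G3: "g3 \<le> v"
    and G4: "g4 \<le> v"
    and G5: "g5 \<le> v"
    and Hh0: "h0 \<le> w"
    and Hh1: "h1 \<le> w"
    and Hh2: "h2 \<le> w"
    and Hh3: "h3 \<le> w"
    and Hh4: "h4 \<le> w"
    and Hh5: "h5 \<le> w"
    and D0: "x0 = 0 \<or> g0 = v"
    and D1: "x1 = 0 \<or> g1 = v"
    and D2: "x2 = 0 \<or> g2 = v"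
    and D3: "x3 = 0 \<or> g3 = v"
    and D4: "x4 = 0 \<or> g4 = v"
    and D5: "x5 = 0 \<or> g5 = v"
    and D6: "y0 = 0 \<or> h0 = w"
    and D7: "y1 = 0 \<or> h1 = w"
    and D8: "y2 = 0 \<or> h2 = w"
    and D9: "y3 = 0 \<or> h3 = w"
    and D10: "y4 = 0 \<or> h4 = w"
    and D11: "y5 = 0 \<or> h5 = w"
  shows "x0 = 1/3 \<and> x1 = 1/3 \<and> x2 = 1/3 \<and> x3 = 0 \<and> x4 = 0 \<and> x5 = 0 \<and> y0 = 1/3 \<and> y1 = 1/3 \<and> y2 = 1/3 \<and> y3 = 0 \<and> y4 = 0 \<and> y5 = 0"
proof -
  from D0 show ?thesis
  proof
    assume a1: "x0 = 0"
    from D1 show ?thesis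
    proof
      assume a2: "x1 = 0"
      from D2 show ?thesis
      proof
        assume a3: "x2 = 0"
        from D3 show ?thesis
        proof
          assume a4: "x3 = 0"
          from D6 show ?thesis
          proof
            assume a5: "y0 = 0"
            from D7 show ?thesis
            proof
              assume a6: "y1 = 0"
              from D8 show ?thesis
              proof
                assume a7: "y2 = 0"
                from D10 show ?thesis
                proof
                  assume a8: "y4 = 0"
                  from D5 show ?thesis
                  proof
                    assume a9: "x5 = 0"
                    from D4 show ?thesis
                    proof
                      assume a10: "x4 = 0"
                      show ?thesis using Nx0 Nx1 Nx2 Nx3 Nx4 Nx5 Ny0 Ny1 Ny2 Ny3 Ny4 Ny5 Sx a1 a2 a3 a4 a9 a10 by - (rule FalseE, linarith)
                    next
                      assume b10: "g4 = v"
                      from D9 show ?thesis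
                      proof
                        assume a11: "y3 = 0"
                        show ?thesis using Nx0 Nx1 Nx2 Nx3 Nx4 Nx5 Ny0 Ny1 Ny2 Ny3 Ny4 Ny5 Sy G5 a5 a6 a7 b10 a11 E4 E5 by - (rule FalseE, linarith)
                      next
                        assume b11: "h3 = w"
                        show ?thesis using Nx0 Nx1 Nx2 Nx3 Nx4 Nx5 Ny0 Ny1 Ny2 Ny3 Ny4 Ny5 Sx Hh5 a3 a4 a9 b11 F3 F5 by - (rule FalseE, linarith)
                      qed
                    qed
                  next
                    assume b9: "g5 = v"
                    show ?thesis using Nx0 Nx1 Nx2 Nx3 Nx4 Nx5 Ny0 Ny1 Ny2 Ny3 Ny4 Ny5 Sy G3 a5 a6 a8 b9 E3 E5 by - (rule FalseE, linarith)
                  qed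
                next
                  assume b8: "h4 = w"
                  show ?thesis using Nx0 Nx1 Nx2 Nx3 Nx4 Nx5 Ny0 Ny1 Ny2 Ny3 Ny4 Ny5 Sx Hh5 a1 a2 a3 a4 b8 F4 F5 by - (rule FalseE, linarith)
                qed
              next
                assume b7: "h2 = w"
                show ?thesis using Nx0 Nx1 Nx2 Nx3 Nx4 Nx5 Ny0 Ny1 Ny2 Ny3 Ny4 Ny5 Sx Hh5 a2 a3 a4 b7 F2 F5 by - (rule FalseE, linarith)
              qed
            next
              assume b6: "h1 = w"
              show ?thesis using Nx0 Nx1 Nx2 Nx3 Nx4 Nx5 Ny0 Ny1 Ny2 Ny3 Ny4 Ny5 Sx Hh5 a1 a2 a3 a4 b6 F1 F5 by - (rule FalseE, linarith)
            qed
          next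
            assume b5: "h0 = w"
            show ?thesis using Nx0 Nx1 Nx2 Nx3 Nx4 Nx5 Ny0 Ny1 Ny2 Ny3 Ny4 Ny5 Sx Hh5 a1 a3 a4 b5 F0 F5 by - (rule FalseE, linarith)
          qed
        next
          assume b4: "g3 = v"
          from D4 show ?thesis
          proof
            assume a12: "x4 = 0"
            from D6 show ?thesis
            proof
              assume a13: "y0 = 0"
              from D7 show ?thesis
              proof
                assume a14: "y1 = 0"
                from D8 show ?thesis
                proof
                  assume a15: "y2 = 0"
                  from D11 show ?thesis
                  proof
                    assume a16: "y5 = 0"
                    show ?thesis using Nx0 Nx1 Nx2 Nx3 Nx4 Nx5 Ny0 Ny1 Ny2 Ny3 Ny4 Ny5 Sy G4 b4 a15 a16 E3 E4 by - (rule FalseE, linarith)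
                  next
                    assume b16: "h5 = w"
                    show ?thesis using Nx0 Nx1 Nx2 Nx3 Nx4 Nx5 Ny0 Ny1 Ny2 Ny3 Ny4 Ny5 Sx Hh3 a1 a2 a12 b16 F3 F5 by - (rule FalseE, linarith)
                  qed
                next
                  assume b15: "h2 = w"
                  show ?thesis using Nx0 Nx1 Nx2 Nx3 Nx4 Nx5 Ny0 Ny1 Ny2 Ny3 Ny4 Ny5 Sx Hh3 a1 a2 a12 b15 F2 F3 by - (rule FalseE, linarith)
                qed
              next
                assume b14: "h1 = w"
                show ?thesis using Nx0 Nx1 Nx2 Nx3 Nx4 Nx5 Ny0 Ny1 Ny2 Ny3 Ny4 Ny5 Sx Hh3 a1 a2 a12 b14 F1 F3 by - (rule FalseE, linarith)
              qed
            next
              assume b13: "h0 = w"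
              show ?thesis using Nx0 Nx1 Nx2 Nx3 Nx4 Nx5 Ny0 Ny1 Ny2 Ny3 Ny4 Ny5 Sx Hh3 a1 a2 a12 b13 F0 F3 by - (rule FalseE, linarith)
            qed
          next
            assume b12: "g4 = v"
            from D5 show ?thesis
            proof
              assume a17: "x5 = 0"
              from D9 show ?thesis
              proof
                assume a18: "y3 = 0"
                show ?thesis using Nx0 Nx1 Nx2 Nx3 Nx4 Nx5 Ny0 Ny1 Ny2 Ny3 Ny4 Ny5 Sy G1 G5 b4 b12 a18 E1 E3 E4 E5 by - (rule FalseE, linarith)
              next
                assume b18: "h3 = w"
                show ?thesis using Nx0 Nx1 Nx2 Nx3 Nx4 Nx5 Ny0 Ny1 Ny2 Ny3 Ny4 Ny5 Sx Hh4 a3 a17 b18 F3 F4 by - (rule FalseE, linarith)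
              qed
            next
              assume b17: "g5 = v"
              show ?thesis using Nx0 Nx1 Nx2 Nx3 Nx4 Nx5 Ny0 Ny1 Ny2 Ny3 Ny4 Ny5 Sy G1 G2 b4 b12 b17 E1 E2 E3 E4 E5 by - (rule FalseE, linarith)
            qed
          qed
        qed
      next
        assume b3: "g2 = v"
        from D3 show ?thesis
        proof
          assume a19: "x3 = 0"
          from D7 show ?thesis
          proof
            assume a20: "y1 = 0"
            from D10 show ?thesis
            proof
              assume a21: "y4 = 0"
              show ?thesis using Nx0 Nx1 Nx2 Nx3 Nx4 Nx5 Ny0 Ny1 Ny2 Ny3 Ny4 Ny5 Sy G3 G4 G5 b3 a20 a21 E2 E3 E4 E5 by - (rule FalseE, linarith)
            next
              assume b21: "h4 = w"
              show ?thesis using Nx0 Nx1 Nx2 Nx3 Nx4 Nx5 Ny0 Ny1 Ny2 Ny3 Ny4 Ny5 Sx Hh3 Hh5 a1 a2 a19 b21 F3 F4 F5 by - (rule FalseE, linarith)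
            qed
          next
            assume b20: "h1 = w"
            show ?thesis using Nx0 Nx1 Nx2 Nx3 Nx4 Nx5 Ny0 Ny1 Ny2 Ny3 Ny4 Ny5 Sx Hh3 Hh5 a1 a2 a19 b20 F1 F3 F5 by - (rule FalseE, linarith)
          qed
        next
          assume b19: "g3 = v"
          from D4 show ?thesis
          proof
            assume a22: "x4 = 0"
            from D6 show ?thesis
            proof
              assume a23: "y0 = 0"
              from D7 show ?thesis
              proof
                assume a24: "y1 = 0"
                from D11 show ?thesis
                proof
                  assume a25: "y5 = 0"
                  show ?thesis using Nx0 Nx1 Nx2 Nx3 Nx4 Nx5 Ny0 Ny1 Ny2 Ny3 Ny4 Ny5 Sy G0 G4 b3 a24 a25 E0 E2 E4 by - (rule FalseE, linarith)
                next
                  assume b25: "h5 = w"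
                  show ?thesis using Nx0 Nx1 Nx2 Nx3 Nx4 Nx5 Ny0 Ny1 Ny2 Ny3 Ny4 Ny5 Sx Hh3 a1 a2 a22 b25 F3 F5 by - (rule FalseE, linarith)
                qed
              next
                assume b24: "h1 = w"
                show ?thesis using Nx0 Nx1 Nx2 Nx3 Nx4 Nx5 Ny0 Ny1 Ny2 Ny3 Ny4 Ny5 Sx Hh3 a1 a2 a22 b24 F1 F3 by - (rule FalseE, linarith)
              qed
            next
              assume b23: "h0 = w"
              show ?thesis using Nx0 Nx1 Nx2 Nx3 Nx4 Nx5 Ny0 Ny1 Ny2 Ny3 Ny4 Ny5 Sx Hh3 a1 a2 a22 b23 F0 F3 by - (rule FalseE, linarith)
            qed
          next
            assume b22: "g4 = v"
            from D5 show ?thesis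
            proof
              assume a26: "x5 = 0"
              from D7 show ?thesis
              proof
                assume a27: "y1 = 0"
                from D8 show ?thesis
                proof
                  assume a28: "y2 = 0"
                  from D9 show ?thesis
                  proof
                    assume a29: "y3 = 0"
                    show ?thesis using Nx0 Nx1 Nx2 Nx3 Nx4 Nx5 Ny0 Ny1 Ny2 Ny3 Ny4 Ny5 Sy G5 b19 b22 a28 a29 E3 E4 E5 by - (rule FalseE, linarith)
                  next
                    assume b29: "h3 = w"
                    from D11 show ?thesis
                    proof
                      assume a30: "y5 = 0"
                      show ?thesis using Nx0 Nx1 Nx2 Nx3 Nx4 Nx5 Ny0 Ny1 Ny2 Ny3 Ny4 Ny5 Sy b19 b22 a28 a30 E3 E4 by - (rule FalseE, linarith)
                    next
                      assume b30: "h5 = w"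
                      show ?thesis using Nx0 Nx1 Nx2 Nx3 Nx4 Nx5 Ny0 Ny1 Ny2 Ny3 Ny4 Ny5 Sx Hh2 a1 a26 b29 b30 F2 F3 F5 by - (rule FalseE, linarith)
                    qed
                  qed
                next
                  assume b28: "h2 = w"
                  show ?thesis using Nx0 Nx1 Nx2 Nx3 Nx4 Nx5 Ny0 Ny1 Ny2 Ny3 Ny4 Ny5 Sx Hh0 Hh4 a2 a26 b28 F0 F2 F4 by - (rule FalseE, linarith)
                qed
              next
                assume b27: "h1 = w"
                show ?thesis using Nx0 Nx1 Nx2 Nx3 Nx4 Nx5 Ny0 Ny1 Ny2 Ny3 Ny4 Ny5 Sx Hh3 Hh4 a1 a2 a26 b27 F1 F3 F4 by - (rule FalseE, linarith)
              qed
            next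
              assume b26: "g5 = v"
              show ?thesis using Nx0 Nx1 Nx2 Nx3 Nx4 Nx5 Ny0 Ny1 Ny2 Ny3 Ny4 Ny5 Sy G1 b3 b19 b22 b26 E1 E2 E3 E4 E5 by - (rule FalseE, linarith)
            qed
          qed
        qed
      qed
    next
      assume b2: "g1 = v"
      from D2 show ?thesis
      proof
        assume a31: "x2 = 0"
        from D3 show ?thesis
        proof
          assume a32: "x3 = 0"
          from D6 show ?thesis
          proof
            assume a33: "y0 = 0"
            from D10 show ?thesis
            proof
              assume a34: "y4 = 0"
              show ?thesis using Nx0 Nx1 Nx2 Nx3 Nx4 Nx5 Ny0 Ny1 Ny2 Ny3 Ny4 Ny5 Sy G2 G3 b2 a33 a34 E1 E2 E3 by - (rule FalseE, linarith)
            next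
              assume b34: "h4 = w"
              show ?thesis using Nx0 Nx1 Nx2 Nx3 Nx4 Nx5 Ny0 Ny1 Ny2 Ny3 Ny4 Ny5 Sx Hh2 Hh5 a1 a32 b34 F2 F4 F5 by - (rule FalseE, linarith)
            qed
          next
            assume b33: "h0 = w"
            show ?thesis using Nx0 Nx1 Nx2 Nx3 Nx4 Nx5 Ny0 Ny1 Ny2 Ny3 Ny4 Ny5 Sx Hh5 a1 a31 a32 b33 F0 F5 by - (rule FalseE, linarith)
          qed
        next
          assume b32: "g3 = v"
          from D11 show ?thesis
          proof
            assume a35: "y5 = 0"
            show ?thesis using Nx0 Nx1 Nx2 Nx3 Nx4 Nx5 Ny0 Ny1 Ny2 Ny3 Ny4 Ny5 Sy G0 G2 G4 b2 b32 a35 E0 E1 E2 E3 E4 by - (rule FalseE, linarith)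
          next
            assume b35: "h5 = w"
            from D4 show ?thesis
            proof
              assume a36: "x4 = 0"
              from D5 show ?thesis
              proof
                assume a37: "x5 = 0"
                show ?thesis using Nx0 Nx1 Nx2 Nx3 Nx4 Nx5 Ny0 Ny1 Ny2 Ny3 Ny4 Ny5 Sx Hh2 a1 b35 a36 a37 F2 F5 by - (rule FalseE, linarith)
              next
                assume b37: "g5 = v"
                from D6 show ?thesis
                proof
                  assume a38: "y0 = 0"
                  from D10 show ?thesis
                  proof
                    assume a39: "y4 = 0"
                    show ?thesis using Nx0 Nx1 Nx2 Nx3 Nx4 Nx5 Ny0 Ny1 Ny2 Ny3 Ny4 Ny5 Sy G2 b2 b32 a38 a39 E1 E2 E3 by - (rule FalseE, linarith)
                  next
                    assume b39: "h4 = w"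
                    show ?thesis using Nx0 Nx1 Nx2 Nx3 Nx4 Nx5 Ny0 Ny1 Ny2 Ny3 Ny4 Ny5 Sx Hh2 a1 b35 a36 b39 F2 F4 F5 by - (rule FalseE, linarith)
                  qed
                next
                  assume b38: "h0 = w"
                  show ?thesis using Nx0 Nx1 Nx2 Nx3 Nx4 Nx5 Ny0 Ny1 Ny2 Ny3 Ny4 Ny5 Sx Hh3 Hh4 a1 a31 b35 a36 b38 F0 F3 F4 F5 by - (rule FalseE, linarith)
                qed
              qed
            next
              assume b36: "g4 = v"
              from D5 show ?thesis
              proof
                assume a40: "x5 = 0"
                from D9 show ?thesis
                proof
                  assume a41: "y3 = 0"
                  show ?thesis using Nx0 Nx1 Nx2 Nx3 Nx4 Nx5 Ny0 Ny1 Ny2 Ny3 Ny4 Ny5 Sy G5 b2 b32 b36 a41 E1 E3 E4 E5 by - (rule FalseE, linarith)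
                next
                  assume b41: "h3 = w"
                  show ?thesis using Nx0 Nx1 Nx2 Nx3 Nx4 Nx5 Ny0 Ny1 Ny2 Ny3 Ny4 Ny5 Sx Hh4 a31 a40 b41 F3 F4 by - (rule FalseE, linarith)
                qed
              next
                assume b40: "g5 = v"
                show ?thesis using Nx0 Nx1 Nx2 Nx3 Nx4 Nx5 Ny0 Ny1 Ny2 Ny3 Ny4 Ny5 Sy G2 b2 b32 b36 b40 E1 E2 E3 E4 E5 by - (rule FalseE, linarith)
              qed
            qed
          qed
        qed
      next
        assume b31: "g2 = v"
        from D3 show ?thesis
        proof
          assume a42: "x3 = 0"
          from D7 show ?thesis
          proof
            assume a43: "y1 = 0"
            from D10 show ?thesis
            proof
              assume a44: "y4 = 0"
              show ?thesis using Nx0 Nx1 Nx2 Nx3 Nx4 Nx5 Ny0 Ny1 Ny2 Ny3 Ny4 Ny5 Sy G3 b2 b31 a43 a44 E1 E2 E3 by - (rule FalseE, linarith)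
            next
              assume b44: "h4 = w"
              show ?thesis using Nx0 Nx1 Nx2 Nx3 Nx4 Nx5 Ny0 Ny1 Ny2 Ny3 Ny4 Ny5 Sx Hh2 Hh5 a1 a42 b44 F2 F4 F5 by - (rule FalseE, linarith)
            qed
          next
            assume b43: "h1 = w"
            show ?thesis using Nx0 Nx1 Nx2 Nx3 Nx4 Nx5 Ny0 Ny1 Ny2 Ny3 Ny4 Ny5 Sx Hh2 Hh5 a1 a42 b43 F1 F2 F5 by - (rule FalseE, linarith)
          qed
        next
          assume b42: "g3 = v"
          from D11 show ?thesis
          proof
            assume a45: "y5 = 0"
            show ?thesis using Nx0 Nx1 Nx2 Nx3 Nx4 Nx5 Ny0 Ny1 Ny2 Ny3 Ny4 Ny5 Sy G0 G4 b2 b31 b42 a45 E0 E1 E2 E3 E4 by - (rule FalseE, linarith)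
          next
            assume b45: "h5 = w"
            from D4 show ?thesis
            proof
              assume a46: "x4 = 0"
              from D5 show ?thesis
              proof
                assume a47: "x5 = 0"
                show ?thesis using Nx0 Nx1 Nx2 Nx3 Nx4 Nx5 Ny0 Ny1 Ny2 Ny3 Ny4 Ny5 Sx Hh2 a1 b45 a46 a47 F2 F5 by - (rule FalseE, linarith)
              next
                assume b47: "g5 = v"
                from D6 show ?thesis
                proof
                  assume a48: "y0 = 0"
                  from D10 show ?thesis
                  proof
                    assume a49: "y4 = 0"
                    show ?thesis using Nx0 Nx1 Nx2 Nx3 Nx4 Nx5 Ny0 Ny1 Ny2 Ny3 Ny4 Ny5 Sy b2 b31 b42 a48 a49 E1 E2 E3 by - (rule FalseE, linarith)
                  next
                    assume b49: "h4 = w"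
                    show ?thesis using Nx0 Nx1 Nx2 Nx3 Nx4 Nx5 Ny0 Ny1 Ny2 Ny3 Ny4 Ny5 Sx Hh2 a1 b45 a46 b49 F2 F4 F5 by - (rule FalseE, linarith)
                  qed
                next
                  assume b48: "h0 = w"
                  show ?thesis using Nx0 Nx1 Nx2 Nx3 Nx4 Nx5 Ny0 Ny1 Ny2 Ny3 Ny4 Ny5 Sx Hh2 Hh3 a1 a46 b48 F0 F2 F3 by - (rule FalseE, linarith)
                qed
              qed
            next
              assume b46: "g4 = v"
              from D5 show ?thesis
              proof
                assume a50: "x5 = 0"
                from D9 show ?thesis
                proof
                  assume a51: "y3 = 0"
                  show ?thesis using Nx0 Nx1 Nx2 Nx3 Nx4 Nx5 Ny0 Ny1 Ny2 Ny3 Ny4 Ny5 Sy b2 b31 b42 b46 a51 E1 E2 E3 E4 by - (rule FalseE, linarith)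
                next
                  assume b51: "h3 = w"
                  show ?thesis using Nx0 Nx1 Nx2 Nx3 Nx4 Nx5 Ny0 Ny1 Ny2 Ny3 Ny4 Ny5 Sx Hh2 a1 b45 a50 b51 F2 F3 F5 by - (rule FalseE, linarith)
                qed
              next
                assume b50: "g5 = v"
                show ?thesis using Nx0 Nx1 Nx2 Nx3 Nx4 Nx5 Ny0 Ny1 Ny2 Ny3 Ny4 Ny5 Sy b2 b31 b42 b46 b50 E1 E2 E3 E4 E5 by - (rule FalseE, linarith)
              qed
            qed
          qed
        qed
      qed
    qed
  next
    assume b1: "g0 = v"
    from D1 show ?thesis
    proof
      assume a52: "x1 = 0"
      from D2 show ?thesis
      proof
        assume a53: "x2 = 0"
        from D3 show ?thesis
        proof
          assume a54: "x3 = 0"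
          from D6 show ?thesis
          proof
            assume a55: "y0 = 0"
            from D10 show ?thesis
            proof
              assume a56: "y4 = 0"
              show ?thesis using Nx0 Nx1 Nx2 Nx3 Nx4 Nx5 Ny0 Ny1 Ny2 Ny3 Ny4 Ny5 Sy G2 G3 b1 a55 a56 E0 E2 E3 by - (rule FalseE, linarith)
            next
              assume b56: "h4 = w"
              show ?thesis using Nx0 Nx1 Nx2 Nx3 Nx4 Nx5 Ny0 Ny1 Ny2 Ny3 Ny4 Ny5 Sx Hh1 Hh5 a53 a54 b56 F1 F4 F5 by - (rule FalseE, linarith)
            qed
          next
            assume b55: "h0 = w"
            show ?thesis using Nx0 Nx1 Nx2 Nx3 Nx4 Nx5 Ny0 Ny1 Ny2 Ny3 Ny4 Ny5 Sx Hh1 Hh5 a53 a54 b55 F0 F1 F5 by - (rule FalseE, linarith)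
          qed
        next
          assume b54: "g3 = v"
          from D4 show ?thesis
          proof
            assume a57: "x4 = 0"
            from D6 show ?thesis
            proof
              assume a58: "y0 = 0"
              from D8 show ?thesis
              proof
                assume a59: "y2 = 0"
                from D9 show ?thesis
                proof
                  assume a60: "y3 = 0"
                  show ?thesis using Nx0 Nx1 Nx2 Nx3 Nx4 Nx5 Ny0 Ny1 Ny2 Ny3 Ny4 Ny5 Sy G5 b1 a58 a59 a60 E0 E5 by - (rule FalseE, linarith)
                next
                  assume b60: "h3 = w"
                  from D5 show ?thesis
                  proof
                    assume a61: "x5 = 0"
                    show ?thesis using Nx0 Nx1 Nx2 Nx3 Nx4 Nx5 Ny0 Ny1 Ny2 Ny3 Ny4 Ny5 Sx Hh4 a53 b60 a61 F3 F4 by - (rule FalseE, linarith)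
                  next
                    assume b61: "g5 = v"
                    from D10 show ?thesis
                    proof
                      assume a62: "y4 = 0"
                      show ?thesis using Nx0 Nx1 Nx2 Nx3 Nx4 Nx5 Ny0 Ny1 Ny2 Ny3 Ny4 Ny5 Sy G4 b1 b54 a58 a59 b61 a62 E0 E3 E4 E5 by - (rule FalseE, linarith)
                    next
                      assume b62: "h4 = w"
                      from D11 show ?thesis
                      proof
                        assume a63: "y5 = 0"
                        show ?thesis using Nx0 Nx1 Nx2 Nx3 Nx4 Nx5 Ny0 Ny1 Ny2 Ny3 Ny4 Ny5 Sy b1 b54 a59 b61 a63 E0 E3 E5 by - (rule FalseE, linarith)
                      next
                        assume b63: "h5 = w"
                        show ?thesis using Nx0 Nx1 Nx2 Nx3 Nx4 Nx5 Ny0 Ny1 Ny2 Ny3 Ny4 Ny5 Sx Hh1 a57 b60 b62 b63 F1 F3 F4 F5 by - (rule FalseE, linarith)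
                      qed
                    qed
                  qed
                qed
              next
                assume b59: "h2 = w"
                show ?thesis using Nx0 Nx1 Nx2 Nx3 Nx4 Nx5 Ny0 Ny1 Ny2 Ny3 Ny4 Ny5 Sx Hh3 Hh4 Hh5 a52 a57 b59 F2 F3 F4 F5 by - (rule FalseE, linarith)
              qed
            next
              assume b58: "h0 = w"
              show ?thesis using Nx0 Nx1 Nx2 Nx3 Nx4 Nx5 Ny0 Ny1 Ny2 Ny3 Ny4 Ny5 Sx Hh1 Hh3 a53 a57 b58 F0 F1 F3 by - (rule FalseE, linarith)
            qed
          next
            assume b57: "g4 = v"
            from D5 show ?thesis
            proof
              assume a64: "x5 = 0"
              from D9 show ?thesis
              proof
                assume a65: "y3 = 0"
                show ?thesis using Nx0 Nx1 Nx2 Nx3 Nx4 Nx5 Ny0 Ny1 Ny2 Ny3 Ny4 Ny5 Sy G2 b1 b54 b57 a65 E0 E2 E3 E4 by - (rule FalseE, linarith)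
              next
                assume b65: "h3 = w"
                show ?thesis using Nx0 Nx1 Nx2 Nx3 Nx4 Nx5 Ny0 Ny1 Ny2 Ny3 Ny4 Ny5 Sx Hh4 a53 a64 b65 F3 F4 by - (rule FalseE, linarith)
              qed
            next
              assume b64: "g5 = v"
              show ?thesis using Nx0 Nx1 Nx2 Nx3 Nx4 Nx5 Ny0 Ny1 Ny2 Ny3 Ny4 Ny5 Sy G2 b1 b54 b57 b64 E0 E2 E3 E4 E5 by - (rule FalseE, linarith)
            qed
          qed
        qed
      next
        assume b53: "g2 = v"
        from D3 show ?thesis
        proof
          assume a66: "x3 = 0"
          from D8 show ?thesis
          proof
            assume a67: "y2 = 0"
            from D10 show ?thesis
            proof
              assume a68: "y4 = 0"
              show ?thesis using Nx0 Nx1 Nx2 Nx3 Nx4 Nx5 Ny0 Ny1 Ny2 Ny3 Ny4 Ny5 Sy G1 G3 b1 a67 a68 E0 E1 E3 by - (rule FalseE, linarith)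
            next
              assume b68: "h4 = w"
              show ?thesis using Nx0 Nx1 Nx2 Nx3 Nx4 Nx5 Ny0 Ny1 Ny2 Ny3 Ny4 Ny5 Sx Hh1 Hh3 Hh5 a66 b68 F1 F3 F4 F5 by - (rule FalseE, linarith)
            qed
          next
            assume b67: "h2 = w"
            show ?thesis using Nx0 Nx1 Nx2 Nx3 Nx4 Nx5 Ny0 Ny1 Ny2 Ny3 Ny4 Ny5 Sx Hh0 Hh5 a52 a66 b67 F0 F2 F5 by - (rule FalseE, linarith)
          qed
        next
          assume b66: "g3 = v"
          from D4 show ?thesis
          proof
            assume a69: "x4 = 0"
            from D8 show ?thesis
            proof
              assume a70: "y2 = 0"
              from D9 show ?thesis
              proof
                assume a71: "y3 = 0"
                show ?thesis using Nx0 Nx1 Nx2 Nx3 Nx4 Nx5 Ny0 Ny1 Ny2 Ny3 Ny4 Ny5 Sy G5 b53 b66 a70 a71 E2 E3 E5 by - (rule FalseE, linarith)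
              next
                assume b71: "h3 = w"
                from D10 show ?thesis
                proof
                  assume a72: "y4 = 0"
                  show ?thesis using Nx0 Nx1 Nx2 Nx3 Nx4 Nx5 Ny0 Ny1 Ny2 Ny3 Ny4 Ny5 Sy G1 b1 b66 a70 a72 E0 E1 E3 by - (rule FalseE, linarith)
                next
                  assume b72: "h4 = w"
                  from D11 show ?thesis
                  proof
                    assume a73: "y5 = 0"
                    show ?thesis using Nx0 Nx1 Nx2 Nx3 Nx4 Nx5 Ny0 Ny1 Ny2 Ny3 Ny4 Ny5 Sy G4 b66 a70 a73 E3 E4 by - (rule FalseE, linarith)
                  next
                    assume b73: "h5 = w"
                    show ?thesis using Nx0 Nx1 Nx2 Nx3 Nx4 Nx5 Ny0 Ny1 Ny2 Ny3 Ny4 Ny5 Sx Hh1 a69 b71 b72 b73 F1 F3 F4 F5 by - (rule FalseE, linarith)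
                  qed
                qed
              qed
            next
              assume b70: "h2 = w"
              show ?thesis using Nx0 Nx1 Nx2 Nx3 Nx4 Nx5 Ny0 Ny1 Ny2 Ny3 Ny4 Ny5 Sx Hh3 Hh4 Hh5 a52 a69 b70 F2 F3 F4 F5 by - (rule FalseE, linarith)
            qed
          next
            assume b69: "g4 = v"
            from D5 show ?thesis
            proof
              assume a74: "x5 = 0"
              from D8 show ?thesis
              proof
                assume a75: "y2 = 0"
                from D9 show ?thesis
                proof
                  assume a76: "y3 = 0"
                  show ?thesis using Nx0 Nx1 Nx2 Nx3 Nx4 Nx5 Ny0 Ny1 Ny2 Ny3 Ny4 Ny5 Sy b1 b53 b66 b69 a76 E0 E2 E3 E4 by - (rule FalseE, linarith)
                next
                  assume b76: "h3 = w"
                  from D11 show ?thesis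
                  proof
                    assume a77: "y5 = 0"
                    show ?thesis using Nx0 Nx1 Nx2 Nx3 Nx4 Nx5 Ny0 Ny1 Ny2 Ny3 Ny4 Ny5 Sy b66 b69 a75 a77 E3 E4 by - (rule FalseE, linarith)
                  next
                    assume b77: "h5 = w"
                    show ?thesis using Nx0 Nx1 Nx2 Nx3 Nx4 Nx5 Ny0 Ny1 Ny2 Ny3 Ny4 Ny5 Sx Hh1 Hh2 a74 b76 b77 F1 F2 F3 F5 by - (rule FalseE, linarith)
                  qed
                qed
              next
                assume b75: "h2 = w"
                show ?thesis using Nx0 Nx1 Nx2 Nx3 Nx4 Nx5 Ny0 Ny1 Ny2 Ny3 Ny4 Ny5 Sx Hh0 Hh4 a52 a74 b75 F0 F2 F4 by - (rule FalseE, linarith)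
              qed
            next
              assume b74: "g5 = v"
              show ?thesis using Nx0 Nx1 Nx2 Nx3 Nx4 Nx5 Ny0 Ny1 Ny2 Ny3 Ny4 Ny5 Sy b1 b53 b66 b69 b74 E0 E2 E3 E4 E5 by - (rule FalseE, linarith)
            qed
          qed
        qed
      qed
    next
      assume b52: "g1 = v"
      from D2 show ?thesis
      proof
        assume a78: "x2 = 0"
        from D3 show ?thesis
        proof
          assume a79: "x3 = 0"
          from D6 show ?thesis
          proof
            assume a80: "y0 = 0"
            from D10 show ?thesis
            proof
              assume a81: "y4 = 0"
              show ?thesis using Nx0 Nx1 Nx2 Nx3 Nx4 Nx5 Ny0 Ny1 Ny2 Ny3 Ny4 Ny5 Sy G3 b1 b52 a80 a81 E0 E1 E3 by - (rule FalseE, linarith)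
            next
              assume b81: "h4 = w"
              show ?thesis using Nx0 Nx1 Nx2 Nx3 Nx4 Nx5 Ny0 Ny1 Ny2 Ny3 Ny4 Ny5 Sx Hh1 Hh5 a78 a79 b81 F1 F4 F5 by - (rule FalseE, linarith)
            qed
          next
            assume b80: "h0 = w"
            show ?thesis using Nx0 Nx1 Nx2 Nx3 Nx4 Nx5 Ny0 Ny1 Ny2 Ny3 Ny4 Ny5 Sx Hh1 Hh5 a78 a79 b80 F0 F1 F5 by - (rule FalseE, linarith)
          qed
        next
          assume b79: "g3 = v"
          from D11 show ?thesis
          proof
            assume a82: "y5 = 0"
            show ?thesis using Nx0 Nx1 Nx2 Nx3 Nx4 Nx5 Ny0 Ny1 Ny2 Ny3 Ny4 Ny5 Sy G2 G4 b1 b52 b79 a82 E0 E1 E2 E3 E4 by - (rule FalseE, linarith)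
          next
            assume b82: "h5 = w"
            from D4 show ?thesis
            proof
              assume a83: "x4 = 0"
              from D5 show ?thesis
              proof
                assume a84: "x5 = 0"
                show ?thesis using Nx0 Nx1 Nx2 Nx3 Nx4 Nx5 Ny0 Ny1 Ny2 Ny3 Ny4 Ny5 Sx Hh1 a78 b82 a83 a84 F1 F5 by - (rule FalseE, linarith)
              next
                assume b84: "g5 = v"
                from D10 show ?thesis
                proof
                  assume a85: "y4 = 0"
                  show ?thesis using Nx0 Nx1 Nx2 Nx3 Nx4 Nx5 Ny0 Ny1 Ny2 Ny3 Ny4 Ny5 Sy b1 b52 b79 b84 a85 E0 E1 E3 E5 by - (rule FalseE, linarith)
                next
                  assume b85: "h4 = w"
                  show ?thesis using Nx0 Nx1 Nx2 Nx3 Nx4 Nx5 Ny0 Ny1 Ny2 Ny3 Ny4 Ny5 Sx Hh1 a78 b82 a83 b85 F1 F4 F5 by - (rule FalseE, linarith)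
                qed
              qed
            next
              assume b83: "g4 = v"
              from D5 show ?thesis
              proof
                assume a86: "x5 = 0"
                from D9 show ?thesis
                proof
                  assume a87: "y3 = 0"
                  show ?thesis using Nx0 Nx1 Nx2 Nx3 Nx4 Nx5 Ny0 Ny1 Ny2 Ny3 Ny4 Ny5 Sy b1 b52 b79 b83 a87 E0 E1 E3 E4 by - (rule FalseE, linarith)
                next
                  assume b87: "h3 = w"
                  show ?thesis using Nx0 Nx1 Nx2 Nx3 Nx4 Nx5 Ny0 Ny1 Ny2 Ny3 Ny4 Ny5 Sx Hh4 a78 a86 b87 F3 F4 by - (rule FalseE, linarith)
                qed
              next
                assume b86: "g5 = v"
                show ?thesis using Nx0 Nx1 Nx2 Nx3 Nx4 Nx5 Ny0 Ny1 Ny2 Ny3 Ny4 Ny5 Sy b1 b52 b79 b83 b86 E0 E1 E3 E4 E5 by - (rule FalseE, linarith)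
              qed
            qed
          qed
        qed
      next
        assume b78: "g2 = v"
        from D3 show ?thesis
        proof
          assume a88: "x3 = 0"
          from D10 show ?thesis
          proof
            assume a89: "y4 = 0"
            from D5 show ?thesis
            proof
              assume a90: "x5 = 0"
              from D6 show ?thesis
              proof
                assume a91: "y0 = 0"
                show ?thesis using Nx0 Nx1 Nx2 Nx3 Nx4 Nx5 Ny0 Ny1 Ny2 Ny3 Ny4 Ny5 Sy G3 b52 b78 a89 a91 E1 E2 E3 by - (rule FalseE, linarith)
              next
                assume b91: "h0 = w"
                from D7 show ?thesis
                proof
                  assume a92: "y1 = 0"
                  show ?thesis using Nx0 Nx1 Nx2 Nx3 Nx4 Nx5 Ny0 Ny1 Ny2 Ny3 Ny4 Ny5 Sy G3 b52 b78 a89 a92 E1 E2 E3 by - (rule FalseE, linarith)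
                next
                  assume b92: "h1 = w"
                  from D8 show ?thesis
                  proof
                    assume a93: "y2 = 0"
                    show ?thesis using Nx0 Nx1 Nx2 Nx3 Nx4 Nx5 Ny0 Ny1 Ny2 Ny3 Ny4 Ny5 Sy G3 b1 b52 a89 a93 E0 E1 E3 by - (rule FalseE, linarith)
                  next
                    assume b93: "h2 = w"
                    from D9 show ?thesis
                    proof
                      assume a94: "y3 = 0"
                      from D4 show ?thesis
                      proof
                        assume a95: "x4 = 0"
                        from D11 show ?thesis
                        proof
                          assume a96: "y5 = 0"
                          show ?thesis using Nx0 Nx1 Nx2 Nx3 Nx4 Nx5 Ny0 Ny1 Ny2 Ny3 Ny4 Ny5 Sx Sy G0 G1 G2 G3 G4 G5 Hh0 Hh1 Hh2 Hh3 Hh4 Hh5 E0 E1 E2 E3 E4 E5 F0 F1 F2 F3 F4 F5 b1 b52 b78 a88 a89 a90 b91 b92 b93 a94 a95 a96 by - (intro conjI; linarith)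
                        next
                          assume b96: "h5 = w"
                          show ?thesis using Nx0 Nx1 Nx2 Nx3 Nx4 Nx5 Ny0 Ny1 Ny2 Ny3 Ny4 Ny5 Sx a90 b92 b93 a95 b96 F1 F2 F5 by - (rule FalseE, linarith)
                        qed
                      next
                        assume b95: "g4 = v"
                        show ?thesis using Nx0 Nx1 Nx2 Nx3 Nx4 Nx5 Ny0 Ny1 Ny2 Ny3 Ny4 Ny5 Sy b52 b78 a89 a94 b95 E1 E2 E4 by - (rule FalseE, linarith)
                      qed
                    next
                      assume b94: "h3 = w"
                      show ?thesis using Nx0 Nx1 Nx2 Nx3 Nx4 Nx5 Ny0 Ny1 Ny2 Ny3 Ny4 Ny5 Sx a88 a90 b91 b92 b93 b94 F0 F1 F2 F3 by - (rule FalseE, linarith)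
                    qed
                  qed
                qed
              qed
            next
              assume b90: "g5 = v"
              show ?thesis using Nx0 Nx1 Nx2 Nx3 Nx4 Nx5 Ny0 Ny1 Ny2 Ny3 Ny4 Ny5 Sy G3 b1 b52 a89 b90 E0 E1 E3 E5 by - (rule FalseE, linarith)
            qed
          next
            assume b89: "h4 = w"
            show ?thesis using Nx0 Nx1 Nx2 Nx3 Nx4 Nx5 Ny0 Ny1 Ny2 Ny3 Ny4 Ny5 Sx Hh1 Hh3 Hh5 a88 b89 F1 F3 F4 F5 by - (rule FalseE, linarith)
          qed
        next
          assume b88: "g3 = v"
          from D11 show ?thesis
          proof
            assume a97: "y5 = 0"
            show ?thesis using Nx0 Nx1 Nx2 Nx3 Nx4 Nx5 Ny0 Ny1 Ny2 Ny3 Ny4 Ny5 Sy G4 b1 b52 b78 b88 a97 E0 E1 E2 E3 E4 by - (rule FalseE, linarith)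
          next
            assume b97: "h5 = w"
            from D4 show ?thesis
            proof
              assume a98: "x4 = 0"
              from D5 show ?thesis
              proof
                assume a99: "x5 = 0"
                show ?thesis using Nx0 Nx1 Nx2 Nx3 Nx4 Nx5 Ny0 Ny1 Ny2 Ny3 Ny4 Ny5 Sx Hh1 Hh3 b97 a98 a99 F1 F3 F5 by - (rule FalseE, linarith)
              next
                assume b99: "g5 = v"
                from D10 show ?thesis
                proof
                  assume a100: "y4 = 0"
                  show ?thesis using Nx0 Nx1 Nx2 Nx3 Nx4 Nx5 Ny0 Ny1 Ny2 Ny3 Ny4 Ny5 Sy b1 b52 b88 b99 a100 E0 E1 E3 E5 by - (rule FalseE, linarith)
                next
                  assume b100: "h4 = w"
                  show ?thesis using Nx0 Nx1 Nx2 Nx3 Nx4 Nx5 Ny0 Ny1 Ny2 Ny3 Ny4 Ny5 Sx Hh1 Hh3 b97 a98 b100 F1 F3 F4 F5 by - (rule FalseE, linarith)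
                qed
              qed
            next
              assume b98: "g4 = v"
              from D5 show ?thesis
              proof
                assume a101: "x5 = 0"
                from D9 show ?thesis
                proof
                  assume a102: "y3 = 0"
                  show ?thesis using Nx0 Nx1 Nx2 Nx3 Nx4 Nx5 Ny0 Ny1 Ny2 Ny3 Ny4 Ny5 Sy b52 b78 b88 b98 a102 E1 E2 E3 E4 by - (rule FalseE, linarith)
                next
                  assume b102: "h3 = w"
                  show ?thesis using Nx0 Nx1 Nx2 Nx3 Nx4 Nx5 Ny0 Ny1 Ny2 Ny3 Ny4 Ny5 Sx Hh1 Hh2 b97 a101 b102 F1 F2 F3 F5 by - (rule FalseE, linarith)
                qed
              next
                assume b101: "g5 = v"
                show ?thesis using Nx0 Nx1 Nx2 Nx3 Nx4 Nx5 Ny0 Ny1 Ny2 Ny3 Ny4 Ny5 Sy b52 b78 b88 b98 b101 E1 E2 E3 E4 E5 by - (rule FalseE, linarith)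
              qed
            qed
          qed
        qed
      qed
    qed
  qed
qed

theorem proposition3:
  "nash_eq n123 n123 \<and>
   (\<forall>x y. nash_eq x y \<longrightarrow> (\<forall>i<6. x i = n123 i \<and> y i = n123 i))"
proof
  have nsx: "n123 \<in> simplex6" by (simp add: simplex6_def n123_def sum6)
  have val: "bil U n123 n123 = -2/3" by (simp add: bil_alt sum6 U_def n123_def)
  have br: "\<forall>x'\<in>simplex6. bil U x' n123 \<le> bil U n123 n123"
  proof
    fix x' assume "x' \<in> simplex6"
    then have s: "x' 0 + x' 1 + x' 2 + x' 3 + x' 4 + x' 5 = 1" "0 \<le> x' 3" "0 \<le> x' 4" "0 \<le> x' 5"
      by (simp_all add: simplex6_def sum6)
    have "bil U x' n123 = x' 0 * (-2/3) + x' 1 * (-2/3) + x' 2 * (-2/3) + x' 3 * (-5/3) + x' 4 * (-5/3) + x' 5 * (-5/3)"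
      by (simp add: bil_alt sum6 U_def n123_def)
    then show "bil U x' n123 \<le> bil U n123 n123" using s val by linarith
  qed
  show "nash_eq n123 n123" unfolding nash_eq_def using nsx br by blast
next
  show "\<forall>x y. nash_eq x y \<longrightarrow> (\<forall>i<6. x i = n123 i \<and> y i = n123 i)"
  proof (intro allI impI)
  fix x y :: "nat \<Rightarrow> real" and i :: nat assume N: "nash_eq x y" and i: "i < 6"
  define g where "g = (\<lambda>i. \<Sum>j<6. U i j * y j)"
  define h where "h = (\<lambda>i. \<Sum>j<6. U i j * x j)"
  define v where "v = bil U x y"
  define w where "w = bil U y x"
  have xs: "x \<in> simplex6" and ys: "y \<in> simplex6" using N unfolding nash_eq_def by blast+
  have xn: "\<forall>i<6. 0 \<le> x i" "(\<Sum>i<6. x i) = 1" using xs unfolding simplex6_def by auto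
  have yn: "\<forall>i<6. 0 \<le> y i" "(\<Sum>i<6. y i) = 1" using ys unfolding simplex6_def by auto
  have gle: "\<forall>i<6. g i \<le> v"
  proof (intro allI impI)
    fix i :: nat assume "i < 6"
    then have "bil U (e i) y \<le> bil U x y" using N e_simplex unfolding nash_eq_def by blast
    then show "g i \<le> v" using bil_e[OF \<open>i < 6\<close>] unfolding g_def v_def by simp
  qed
  have hle: "\<forall>i<6. h i \<le> w"
  proof (intro allI impI)
    fix i :: nat assume "i < 6"
    then have "bil U (e i) x \<le> bil U y x" using N e_simplex unfolding nash_eq_def by blast
    then show "h i \<le> w" using bil_e[OF \<open>i < 6\<close>] unfolding h_def w_def by simp
  qed
  have vs: "(\<Sum>i<6. x i * g i) = v" unfolding g_def v_def bil_alt by (rule refl)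
  have ws: "(\<Sum>i<6. y i * h i) = w" unfolding h_def w_def bil_alt by (rule refl)
  have cx: "\<forall>i<6. x i = 0 \<or> g i = v" using compl[OF xn gle vs] .
  have cy: "\<forall>i<6. y i = 0 \<or> h i = w" using compl[OF yn hle ws] .
  have F1: "0 \<le> x 0" "0 \<le> x 1" "0 \<le> x 2" "0 \<le> x 3" "0 \<le> x 4" "0 \<le> x 5" "0 \<le> y 0" "0 \<le> y 1" "0 \<le> y 2" "0 \<le> y 3" "0 \<le> y 4" "0 \<le> y 5" using xn yn by simp_all
  have F2: "x 0 + x 1 + x 2 + x 3 + x 4 + x 5 = 1" "y 0 + y 1 + y 2 + y 3 + y 4 + y 5 = 1" using xn yn by (simp_all add: sum6)
  have F3: "g 0 = (0) * y 0 + (-3) * y 1 + (1) * y 2 + (-1) * y 3 + (-1) * y 4 + (-1) * y 5" "g 1 = (1) * y 0 + (0) * y 1 + (-3) * y 2 + (-1) * y 3 + (-1) * y 4 + (-1) * y 5" "g 2 = (-3) * y 0 + (1) * y 1 + (0) * y 2 + (-1) * y 3 + (-1) * y 4 + (-1) * y 5" "g 3 = (-4) * y 0 + (-4) * y 1 + (3) * y 2 + (0) * y 3 + (-5) * y 4 + (1) * y 5" "g 4 = (-1) * y 0 + (-1) * y 1 + (-3) * y 2 + (1) * y 3 + (0) * y 4 + (-5) * y 5" "g 5 = (-1) * y 0 + (-1) * y 1 + (-3) * y 2 + (-5) * y 3 + (1) * y 4 + (0) * y 5" unfolding g_def by (simp_all add: sum6 U_def)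
  have F4: "h 0 = (0) * x 0 + (-3) * x 1 + (1) * x 2 + (-1) * x 3 + (-1) * x 4 + (-1) * x 5" "h 1 = (1) * x 0 + (0) * x 1 + (-3) * x 2 + (-1) * x 3 + (-1) * x 4 + (-1) * x 5" "h 2 = (-3) * x 0 + (1) * x 1 + (0) * x 2 + (-1) * x 3 + (-1) * x 4 + (-1) * x 5" "h 3 = (-4) * x 0 + (-4) * x 1 + (3) * x 2 + (0) * x 3 + (-5) * x 4 + (1) * x 5" "h 4 = (-1) * x 0 + (-1) * x 1 + (-3) * x 2 + (1) * x 3 + (0) * x 4 + (-5) * x 5" "h 5 = (-1) * x 0 + (-1) * x 1 + (-3) * x 2 + (-5) * x 3 + (1) * x 4 + (0) * x 5" unfolding h_def by (simp_all add: sum6 U_def)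
  have F5: "g 0 \<le> v" "g 1 \<le> v" "g 2 \<le> v" "g 3 \<le> v" "g 4 \<le> v" "g 5 \<le> v" "h 0 \<le> w" "h 1 \<le> w" "h 2 \<le> w" "h 3 \<le> w" "h 4 \<le> w" "h 5 \<le> w" using gle hle by simp_all
  have F6: "x 0 = 0 \<or> g 0 = v" "x 1 = 0 \<or> g 1 = v" "x 2 = 0 \<or> g 2 = v" "x 3 = 0 \<or> g 3 = v" "x 4 = 0 \<or> g 4 = v" "x 5 = 0 \<or> g 5 = v" "y 0 = 0 \<or> h 0 = w" "y 1 = 0 \<or> h 1 = w" "y 2 = 0 \<or> h 2 = w" "y 3 = 0 \<or> h 3 = w" "y 4 = 0 \<or> h 4 = w" "y 5 = 0 \<or> h 5 = w" using cx cy by simp_all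
  have C: "x 0 = 1/3 \<and> x 1 = 1/3 \<and> x 2 = 1/3 \<and> x 3 = 0 \<and> x 4 = 0 \<and> x 5 = 0 \<and> y 0 = 1/3 \<and> y 1 = 1/3 \<and> y 2 = 1/3 \<and> y 3 = 0 \<and> y 4 = 0 \<and> y 5 = 0"
    by (rule core[of "x 0" "x 1" "x 2" "x 3" "x 4" "x 5" "y 0" "y 1" "y 2" "y 3" "y 4" "y 5" "g 0" "g 1" "g 2" "g 3" "g 4" "g 5" "h 0" "h 1" "h 2" "h 3" "h 4" "h 5" v w, OF F1 F2 F3 F4 F5 F6])
  have "i = 0 \<or> i = 1 \<or> i = 2 \<or> i = 3 \<or> i = 4 \<or> i = 5" using i by arith
  moreover have R: "x 0 = 1/3" "x 1 = 1/3" "x 2 = 1/3" "x 3 = 0" "x 4 = 0" "x 5 = 0" "y 0 = 1/3" "y 1 = 1/3" "y 2 = 1/3" "y 3 = 0" "y 4 = 0" "y 5 = 0"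
    using C by simp_all
  ultimately show "x i = n123 i \<and> y i = n123 i" by (elim disjE) (simp_all only: R n123_def, simp_all)
  qed
qed

end
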